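(* Let $G$ be a graph on $n$ vertices without isolated vertices. For every $n-i\gamma(G)$ covers $W_1,\dots,W_{n-i\gamma(G)}$ of $G$, there is a cover $W$ of $G$ of the form $W=\{w_{i_1},\dots,w_{i_k}\}$ with $1\le i_1<\dots<i_k\le n-i\gamma(G)$ and $w_{i_j}\in W_{i_j}$ for each $j\in[k]$.
   Context: A cover of $G$ is a set $W\subseteq V(G)$ containing at least one endpoint of every edge. $\gamma(G;A)$ is the minimum size of a set $D$ such that every vertex of $A$ has a neighbor in $D$; $i\gamma(G)=\max\{\gamma(G;I): I\text{ an independent set of }G\}$. *)

theory Defs
  imports Main
begin

definition simple_graph :: "'a set \<Rightarrow> ('a \<Rightarrow> 'a \<Rightarrow> bool) \<Rightarrow> bool" where
  "simple_graph V E \<longleftrightarrow> finite V \<and> (\<forall>u v. E u v \<longrightarrow> u \<in> V \<and> v \<in> V)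
     \<and> (\<forall>u v. E u v \<longrightarrow> E v u) \<and> (\<forall>v. \<not> E v v)"

definition no_isolated :: "'a set \<Rightarrow> ('a \<Rightarrow> 'a \<Rightarrow> bool) \<Rightarrow> bool" where
  "no_isolated V E \<longleftrightarrow> (\<forall>v\<in>V. \<exists>u. E v u)"

definition is_cover :: "'a set \<Rightarrow> ('a \<Rightarrow> 'a \<Rightarrow> bool) \<Rightarrow> 'a set \<Rightarrow> bool" where
  "is_cover V E W \<longleftrightarrow> W \<subseteq> V \<and> (\<forall>u v. E u v \<longrightarrow> u \<in> W \<or> v \<in> W)"

definition independent :: "'a set \<Rightarrow> ('a \<Rightarrow> 'a \<Rightarrow> bool) \<Rightarrow> 'a set \<Rightarrow> bool" where
  "independent V E I \<longleftrightarrow> I \<subseteq> V \<and> (\<forall>u\<in>I. \<forall>v\<in>I. \<not> E u v)"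

definition gamma_on :: "'a set \<Rightarrow> ('a \<Rightarrow> 'a \<Rightarrow> bool) \<Rightarrow> 'a set \<Rightarrow> nat" where
  "gamma_on V E A = Min {card D | D. D \<subseteq> V \<and> (\<forall>a\<in>A. \<exists>d\<in>D. E a d)}"

definition igamma :: "'a set \<Rightarrow> ('a \<Rightarrow> 'a \<Rightarrow> bool) \<Rightarrow> nat" where
  "igamma V E = Max {gamma_on V E I | I. independent V E I}"

end

theory Submission
  imports Defs
begin

definition valid :: "'a set \<Rightarrow> (nat \<Rightarrow> 'a set) \<Rightarrow> nat \<Rightarrow> 'a set \<Rightarrow> ('a \<Rightarrow> nat) \<Rightarrow> bool" where
  "valid V Ws m C \<sigma> \<longleftrightarrow> C \<subseteq> V \<and> inj_on \<sigma> C \<and> \<sigma> ` C \<subseteq> {..<m} \<and> (\<forall>c\<in>C. c \<in> Ws (\<sigma> c))"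

definition good :: "('a \<Rightarrow> 'a \<Rightarrow> bool) \<Rightarrow> 'a set \<Rightarrow> 'a set \<Rightarrow> bool" where
  "good E I C \<longleftrightarrow> (\<forall>a\<in>I\<inter>C. \<exists>u. E a u \<and> u \<notin> C)"

definition cov :: "'a set \<Rightarrow> ('a \<Rightarrow> 'a \<Rightarrow> bool) \<Rightarrow> 'a set \<Rightarrow> ('a \<times> 'a) set" where
  "cov V E C = {(u,v). u\<in>V \<and> v\<in>V \<and> E u v \<and> (u\<in>C \<or> v\<in>C)}"

definition bb :: "'a set \<Rightarrow> ('a \<Rightarrow> 'a \<Rightarrow> bool) \<Rightarrow> 'a set \<Rightarrow> 'a set \<Rightarrow> ('a \<times> 'a) set" where
  "bb V E I C = {p\<in>cov V E C. fst p \<notin> I \<and> snd p \<notin> I}"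

definition allE :: "'a set \<Rightarrow> ('a \<Rightarrow> 'a \<Rightarrow> bool) \<Rightarrow> ('a \<times> 'a) set" where
  "allE V E = {(u,v). u\<in>V \<and> v\<in>V \<and> E u v}"

lemma finite_allE: "finite V \<Longrightarrow> finite (allE V E)"
  by (rule finite_subset[of _ "V \<times> V"]) (auto simp: allE_def)

lemma cov_sub: "cov V E C \<subseteq> allE V E" by (auto simp: cov_def allE_def)
lemma bb_sub: "bb V E I C \<subseteq> cov V E C" by (auto simp: bb_def)

lemma prune:
  assumes sg: "simple_graph V E" and ind: "independent V E I" and v: "valid V Ws m C \<sigma>"
  defines "C' \<equiv> C - {a\<in>I\<inter>C. \<forall>u. E a u \<longrightarrow> u \<in> C}"
  shows "valid V Ws m C' \<sigma> \<and> good E I C' \<and> cov V E C' = cov V E C \<and> bb V E I C' = bb V E I C"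
proof -
  have vc: "valid V Ws m C' \<sigma>" using v unfolding valid_def C'_def by (auto intro: inj_on_subset)
  have gc: "good E I C'" unfolding good_def C'_def by auto
  have cc: "cov V E C' = cov V E C"
  proof
    show "cov V E C' \<subseteq> cov V E C" unfolding cov_def C'_def by auto
    show "cov V E C \<subseteq> cov V E C'"
    proof
      fix p assume p: "p \<in> cov V E C"
      then obtain u w where pu: "p = (u,w)" "u\<in>V" "w\<in>V" "E u w" "u\<in>C \<or> w\<in>C" by (auto simp: cov_def)
      have sym: "E w u" using sg pu(4) by (auto simp: simple_graph_def)
      have nI: "\<not>(u \<in> I \<and> w \<in> I)" using ind pu by (auto simp: independent_def)
      show "p \<in> cov V E C'"
      proof (cases "u \<in> C")
        case True
        show ?thesis
        proof (cases "u \<in> C'")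
          case True thus ?thesis using pu by (auto simp: cov_def)
        next
          case False
          with True have "u \<in> I" "\<forall>x. E u x \<longrightarrow> x \<in> C" unfolding C'_def by auto
          hence "w \<in> C" "w \<notin> I" using pu nI by auto
          hence "w \<in> C'" unfolding C'_def by auto
          thus ?thesis using pu by (auto simp: cov_def)
        qed
      next
        case False
        hence wC: "w \<in> C" using pu by auto
        show ?thesis
        proof (cases "w \<in> C'")
          case True thus ?thesis using pu by (auto simp: cov_def)
        next
          case False
          with wC have "w \<in> I" "\<forall>x. E w x \<longrightarrow> x \<in> C" unfolding C'_def by auto
          hence "u \<in> C" using sym by auto
          thus ?thesis using \<open>u \<notin> C\<close> by simp
        qed
      qed
    qed
  qed
  thus ?thesis using vc gc by (simp add: bb_def)
qed


lemma gamma_facts: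
  assumes sg: "simple_graph V E" and ni: "no_isolated V E" and IV: "I \<subseteq> V"
  shows "finite {card D | D. D \<subseteq> V \<and> (\<forall>a\<in>I. \<exists>d\<in>D. E a d)}"
    and "{card D | D. D \<subseteq> V \<and> (\<forall>a\<in>I. \<exists>d\<in>D. E a d)} \<noteq> {}"
    and "\<And>D. D \<subseteq> V \<Longrightarrow> (\<forall>a\<in>I. \<exists>d\<in>D. E a d) \<Longrightarrow> gamma_on V E I \<le> card D"
    and "gamma_on V E I \<le> card V"
proof -
  have fV: "finite V" using sg by (simp add: simple_graph_def)
  show f: "finite {card D | D. D \<subseteq> V \<and> (\<forall>a\<in>I. \<exists>d\<in>D. E a d)}"
    by (rule finite_subset[of _ "{..card V}"]) (auto intro: card_mono[OF fV])
  have dV: "\<forall>a\<in>I. \<exists>d\<in>V. E a d" using ni IV sg unfolding no_isolated_def simple_graph_def by blast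
  thus "{card D | D. D \<subseteq> V \<and> (\<forall>a\<in>I. \<exists>d\<in>D. E a d)} \<noteq> {}" by blast
  show le: "\<And>D. D \<subseteq> V \<Longrightarrow> (\<forall>a\<in>I. \<exists>d\<in>D. E a d) \<Longrightarrow> gamma_on V E I \<le> card D"
    unfolding gamma_on_def using f by (intro Min_le) auto
  show "gamma_on V E I \<le> card V" using le[of V] dV by simp
qed

lemma gamma_mono:
  assumes sg: "simple_graph V E" and ni: "no_isolated V E" and IV: "I \<subseteq> V" and J: "J \<subseteq> I"
  shows "gamma_on V E J \<le> gamma_on V E I"
proof -
  note g = gamma_facts[OF sg ni IV]
  have "gamma_on V E I \<in> {card D | D. D \<subseteq> V \<and> (\<forall>a\<in>I. \<exists>d\<in>D. E a d)}"
    unfolding gamma_on_def using g(1,2) by (rule Min_in)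
  then obtain D where D: "D \<subseteq> V" "\<forall>a\<in>I. \<exists>d\<in>D. E a d" "gamma_on V E I = card D" by blast
  have "gamma_on V E J \<le> card D"
    using gamma_facts(3)[OF sg ni order.trans[OF J IV] D(1)] D(2) J by blast
  thus ?thesis using D(3) by simp
qed

lemma choose_I:
  assumes sg: "simple_graph V E" and ni: "no_isolated V E"
  shows "\<exists>I. independent V E I \<and> (\<forall>x\<in>V-I. \<exists>a\<in>I. E x a) \<and> igamma V E \<le> gamma_on V E I
           \<and> igamma V E \<le> card V"
proof -
  have fV: "finite V" using sg by (simp add: simple_graph_def)
  let ?G = "{gamma_on V E I | I. independent V E I}"
  have fG: "finite ?G"
    by (rule finite_subset[of _ "{..card V}"])
       (auto simp: independent_def intro: gamma_facts(4)[OF sg ni])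
  have "independent V E {}" by (simp add: independent_def)
  hence neG: "?G \<noteq> {}" by blast
  have "igamma V E \<in> ?G" unfolding igamma_def using fG neG by (rule Max_in)
  then obtain I0 where I0: "independent V E I0" "igamma V E = gamma_on V E I0" by blast
  let ?F = "{J. independent V E J \<and> I0 \<subseteq> J}"
  have fF: "finite ?F" by (rule finite_subset[of _ "Pow V"]) (auto simp: independent_def fV)
  have "I0 \<in> ?F" using I0 by simp
  then obtain I where I: "I \<in> ?F" "\<forall>J\<in>?F. I \<subseteq> J \<longrightarrow> I = J"
    using finite_has_maximal[OF fF] by blast
  have indI: "independent V E I" and sub: "I0 \<subseteq> I" using I by auto
  have IV: "I \<subseteq> V" using indI by (simp add: independent_def)
  have maxI: "\<forall>x\<in>V-I. \<exists>a\<in>I. E x a"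
  proof
    fix x assume x: "x \<in> V - I"
    have "insert x I \<notin> ?F" using I(2) x by blast
    hence "\<not> independent V E (insert x I)" using sub by blast
    then obtain u v where uv: "u \<in> insert x I" "v \<in> insert x I" "E u v"
      using x IV unfolding independent_def by blast
    have nI: "\<not> (u \<in> I \<and> v \<in> I)" using indI uv(3) by (auto simp: independent_def)
    have irr: "u \<noteq> v" using sg uv(3) by (auto simp: simple_graph_def)
    have sym: "E v u" using sg uv(3) by (auto simp: simple_graph_def)
    show "\<exists>a\<in>I. E x a" using uv nI irr sym by auto
  qed
  have "igamma V E \<le> gamma_on V E I" using I0(2) gamma_mono[OF sg ni IV sub] by simp
  moreover have "igamma V E \<le> card V" using I0(2) gamma_facts(4)[OF sg ni] I0(1)
    by (simp add: independent_def)
  ultimately show ?thesis using indI maxI by blast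
qed


lemma factA:
  assumes sg: "simple_graph V E" and ni: "no_isolated V E" and ind: "independent V E I"
    and v: "valid V Ws m C \<sigma>" and gd: "good E I C" and cC: "card C = m"
    and g: "g \<le> gamma_on V E I" "m = card V - g" "g \<le> card V"
    and a: "a \<in> I" "E a u" "a \<notin> C" "u \<notin> C"
  shows False
proof -
  have fV: "finite V" using sg by (simp add: simple_graph_def)
  have IV: "I \<subseteq> V" using ind by (simp add: independent_def)
  have CV: "C \<subseteq> V" using v by (simp add: valid_def)
  have Ev: "\<And>x y. E x y \<Longrightarrow> x \<in> V \<and> y \<in> V" using sg by (simp add: simple_graph_def)
  have EI: "\<And>x y. E x y \<Longrightarrow> x \<in> I \<Longrightarrow> y \<notin> I" using ind by (auto simp: independent_def)
  define U where "U = V - C"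
  define f where "f v = (if v = a then u else SOME w. E v w)" for v
  define D where "D = (U - I) \<union> f ` (U \<inter> I - {a})"
  have fE: "\<And>v. v \<in> V \<Longrightarrow> E v (f v)"
  proof -
    fix v assume "v \<in> V"
    then obtain w where "E v w" using ni by (auto simp: no_isolated_def)
    thus "E v (f v)" unfolding f_def using a(2) by (auto intro: someI)
  qed
  have uU: "u \<in> U - I" using a Ev EI unfolding U_def by auto
  have aU: "a \<in> U \<inter> I" using a IV unfolding U_def by auto
  have DV: "D \<subseteq> V" unfolding D_def U_def using fE Ev by blast
  have dom: "\<forall>x\<in>I. \<exists>d\<in>D. E x d"
  proof
    fix x assume x: "x \<in> I"
    show "\<exists>d\<in>D. E x d"
    proof (cases "x \<in> C")
      case True
      then obtain w where w: "E x w" "w \<notin> C" using gd x by (auto simp: good_def)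
      hence "w \<in> U - I" unfolding U_def using Ev EI x by auto
      thus ?thesis using w unfolding D_def by blast
    next
      case False
      show ?thesis
      proof (cases "x = a")
        case True thus ?thesis using uU a(2) unfolding D_def by blast
      next
        case xa: False
        have "x \<in> U \<inter> I - {a}" using False x xa IV unfolding U_def by auto
        thus ?thesis using fE[of x] x IV unfolding D_def by blast
      qed
    qed
  qed
  have fU: "finite U" using fV unfolding U_def by simp
  have "card D \<le> card (U - I) + card (f ` (U \<inter> I - {a}))"
    unfolding D_def by (rule card_Un_le)
  also have "\<dots> \<le> card (U - I) + card (U \<inter> I - {a})"
    using card_image_le[of "U \<inter> I - {a}" f] fU by simp
  also have "\<dots> = card (U - I) + card (U \<inter> I) - 1"
  proof -
    have "card (U \<inter> I) > 0" using aU fU by (auto simp: card_gt_0_iff)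
    thus ?thesis using aU fU by (simp add: card_Diff_singleton)
  qed
  also have "card (U - I) + card (U \<inter> I) = card U"
  proof -
    have "U = (U - I) \<union> (U \<inter> I)" by blast
    hence "card U = card ((U - I) \<union> (U \<inter> I))" by simp
    also have "\<dots> = card (U - I) + card (U \<inter> I)"
      by (rule card_Un_disjoint) (use fU in auto)
    finally show ?thesis by simp
  qed
  finally have cD: "card D \<le> card U - 1" .
  have cU: "card U = card V - m" unfolding U_def using cC CV fV by (simp add: card_Diff_subset finite_subset)
  have "card U \<ge> 1" using aU fU by (auto simp: Suc_le_eq card_gt_0_iff)
  have "gamma_on V E I \<le> card D" using gamma_facts(3)[OF sg ni IV DV dom] .
  thus False using cD cU g \<open>card U \<ge> 1\<close> by linarith
qed


theorem corollary3p3: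
  fixes V :: "'a set" and E :: "'a \<Rightarrow> 'a \<Rightarrow> bool" and Ws :: "nat \<Rightarrow> 'a set"
  assumes "simple_graph V E"
    and "no_isolated V E"
    and "\<forall>i<card V - igamma V E. is_cover V E (Ws i)"
  shows "\<exists>S w. S \<subseteq> {..<card V - igamma V E} \<and> (\<forall>i\<in>S. w i \<in> Ws i)
              \<and> is_cover V E (w ` S)"
proof -
  note sg = assms(1) and ni = assms(2)
  have fV: "finite V" using sg by (simp add: simple_graph_def)
  have Ev: "\<And>x y. E x y \<Longrightarrow> x \<in> V \<and> y \<in> V" using sg by (simp add: simple_graph_def)
  have Es: "\<And>x y. E x y \<Longrightarrow> E y x" using sg by (simp add: simple_graph_def)
  obtain I where I: "independent V E I" "\<forall>x\<in>V-I. \<exists>a\<in>I. E x a"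
      "igamma V E \<le> gamma_on V E I" "igamma V E \<le> card V"
    using choose_I[OF sg ni] by blast
  have EI: "\<And>x y. E x y \<Longrightarrow> x \<in> I \<Longrightarrow> y \<notin> I" using I(1) by (auto simp: independent_def)
  define m where "m = card V - igamma V E"
  have cov_m: "\<And>i. i < m \<Longrightarrow> is_cover V E (Ws i)" using assms(3) m_def by simp
  define K where "K = card (allE V E) + 1"
  define \<phi> where "\<phi> C = card (bb V E I C) * K + card (cov V E C)" for C
  have fA: "finite (allE V E)" using finite_allE[OF fV] .
  have cK: "\<And>C. card (cov V E C) < K" unfolding K_def using card_mono[OF fA cov_sub] by (simp add: less_Suc_eq_le)
  have bK: "\<And>C. card (bb V E I C) < K" unfolding K_def
    using card_mono[OF fA order.trans[OF bb_sub cov_sub]] by (simp add: less_Suc_eq_le)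
  define P where "P = (\<lambda>(C,\<sigma>). valid V Ws m C \<sigma> \<and> good E I C)"
  have P0: "P ({}, (\<lambda>_. 0))" unfolding P_def valid_def good_def by simp
  have bound: "\<forall>y. P y \<longrightarrow> (\<lambda>(C,\<sigma>). \<phi> C) y < K * K"
  proof (intro allI impI)
    fix y :: "'a set \<times> ('a \<Rightarrow> nat)"
    obtain C \<sigma> where y: "y = (C,\<sigma>)" by (cases y)
    have "\<phi> C < K * K"
    proof -
      have "card (bb V E I C) + 1 \<le> K" using bK[of C] by simp
      hence "(card (bb V E I C) + 1) * K \<le> K * K" by (rule mult_le_mono1)
      thus ?thesis unfolding \<phi>_def using cK[of C] by (simp add: algebra_simps)
    qed
    thus "(\<lambda>(C,\<sigma>). \<phi> C) y < K * K" using y by simp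
  qed
  obtain C\<sigma> where best: "P C\<sigma>" "\<forall>y. P y \<longrightarrow> (\<lambda>(C,\<sigma>). \<phi> C) y \<le> (\<lambda>(C,\<sigma>). \<phi> C) C\<sigma>"
    using Lattices_Big.ex_has_greatest_nat[OF P0 bound] by blast
  obtain C \<sigma> where Cs: "C\<sigma> = (C,\<sigma>)" by (cases C\<sigma>)
  have vC: "valid V Ws m C \<sigma>" and gC: "good E I C" using best(1) Cs unfolding P_def by auto
  have CV: "C \<subseteq> V" using vC by (simp add: valid_def)
  have noimp: "\<phi> C' \<le> \<phi> C" if "valid V Ws m C' \<sigma>'" for C' \<sigma>'
  proof -
    define C'' where "C'' = C' - {a\<in>I\<inter>C'. \<forall>u. E a u \<longrightarrow> u \<in> C'}"
    have pr: "valid V Ws m C'' \<sigma>' \<and> good E I C'' \<and> cov V E C'' = cov V E C' \<and> bb V E I C'' = bb V E I C'"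
      unfolding C''_def by (rule prune[OF sg I(1) that])
    hence "P (C'', \<sigma>')" unfolding P_def by simp
    hence "\<phi> C'' \<le> \<phi> C" using best(2) Cs by fastforce
    thus ?thesis using pr unfolding \<phi>_def by simp
  qed
  have cover: "is_cover V E C"
  proof (rule ccontr)
    assume "\<not> is_cover V E C"
    then obtain x y where xy: "E x y" "x \<notin> C" "y \<notin> C" using CV by (auto simp: is_cover_def)
    have xyV: "x \<in> V" "y \<in> V" using Ev xy(1) by auto
    have xycov: "(x,y) \<notin> cov V E C" using xy by (auto simp: cov_def)
    show False
    proof (cases "\<exists>i<m. i \<notin> \<sigma> ` C")
      case True
      then obtain i where i: "i < m" "i \<notin> \<sigma> ` C" by blast
      obtain z where z: "z \<in> Ws i" "z = x \<or> z = y"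
        using cov_m[OF i(1)] xy(1) unfolding is_cover_def by blast
      have zV: "z \<in> V" "z \<notin> C" using z xyV xy by auto
      define C' where "C' = insert z C"
      define \<sigma>' where "\<sigma>' = \<sigma>(z := i)"
      have vC': "valid V Ws m C' \<sigma>'"
        using vC zV z i unfolding valid_def C'_def \<sigma>'_def
        by (auto simp: inj_on_def)
      have sub1: "cov V E C \<subseteq> cov V E C'" unfolding cov_def C'_def by auto
      have new: "(x,y) \<in> cov V E C'" using xy xyV z unfolding cov_def C'_def by auto
      have "card (cov V E C) < card (cov V E C')"
        using sub1 new xycov by (intro psubset_card_mono finite_subset[OF cov_sub fA]) auto
      moreover have "card (bb V E I C) \<le> card (bb V E I C')"
        using sub1 by (intro card_mono finite_subset[OF order.trans[OF bb_sub cov_sub] fA])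
           (auto simp: bb_def)
      ultimately have "\<phi> C < \<phi> C'" unfolding \<phi>_def
        by (meson add_le_less_mono mult_le_mono1)
      thus False using noimp[OF vC'] by simp
    next
      case False
      hence "\<sigma> ` C = {..<m}" using vC unfolding valid_def by auto
      hence cC: "card C = m" using vC card_image[of \<sigma> C] unfolding valid_def by simp
      have A: "\<And>a u. a \<in> I \<Longrightarrow> E a u \<Longrightarrow> a \<notin> C \<Longrightarrow> u \<notin> C \<Longrightarrow> False"
        using factA[OF sg ni I(1) vC gC cC I(3) m_def I(4)] by blast
      have xI: "x \<notin> I" using A xy by blast
      have yI: "y \<notin> I" using A[of y x] xy Es by blast
      obtain a where a: "a \<in> I" "E x a" using I(2) xyV xI by blast
      have aC: "a \<in> C" using A[of a x] a xy Es by blast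
      have sa: "\<sigma> a < m" using vC aC unfolding valid_def by auto
      obtain z where z: "z \<in> Ws (\<sigma> a)" "z = x \<or> z = y"
        using cov_m[OF sa] xy(1) unfolding is_cover_def by blast
      have zV: "z \<in> V" "z \<notin> C" "z \<notin> I" using z xyV xy xI yI by auto
      define C' where "C' = insert z (C - {a})"
      define \<sigma>' where "\<sigma>' = \<sigma>(z := \<sigma> a)"
      have vC': "valid V Ws m C' \<sigma>'"
        using vC zV z sa aC unfolding valid_def C'_def \<sigma>'_def
        by (auto simp: inj_on_def)
      have sub1: "bb V E I C \<subseteq> bb V E I C'"
        using a(1) unfolding bb_def cov_def C'_def by auto
      have new: "(x,y) \<in> bb V E I C'" using xy xyV z xI yI unfolding bb_def cov_def C'_def by auto
      have nold: "(x,y) \<notin> bb V E I C" using xycov unfolding bb_def by auto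
      have "card (bb V E I C) < card (bb V E I C')"
        using sub1 new nold
        by (intro psubset_card_mono finite_subset[OF order.trans[OF bb_sub cov_sub] fA]) auto
      hence "(card (bb V E I C) + 1) * K \<le> card (bb V E I C') * K"
        by (intro mult_le_mono1) simp
      hence "\<phi> C < \<phi> C'" unfolding \<phi>_def using cK[of C] by simp
      thus False using noimp[OF vC'] by simp
    qed
  qed
  have "\<sigma> ` C \<subseteq> {..<card V - igamma V E}" using vC m_def unfolding valid_def by simp
  moreover have "\<forall>i\<in>\<sigma> ` C. the_inv_into C \<sigma> i \<in> Ws i"
    using vC unfolding valid_def by (auto simp: the_inv_into_f_f)
  moreover have "the_inv_into C \<sigma> ` \<sigma> ` C = C"
    using vC unfolding valid_def by (simp add: the_inv_into_onto)
  ultimately show ?thesis using cover by metis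
qed

end
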